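(* Let $\ell,\ell'\ge1$ and let $A$ ($\ell\times\ell$) and $A'$ ($\ell'\times\ell'$) be symmetric matrices with zero diagonal and all off-diagonal entries in $\{\frac12,1\}$, both dense. Let $J$ be the $\ell'\times\ell$ all-ones matrix and let $$C=\begin{pmatrix}A & J^{T}\\ J & A'\end{pmatrix}.$$ Then $C$ is dense.
   Context: For a symmetric $s\times s$ matrix $M$, consider the quadratic form $\mathbf{u}M\mathbf{u}^T$ on the simplex $\{\mathbf{u}=(u_1,\dots,u_s): u_i\ge 0,\ \sum_i u_i=1\}$. $M$ is called dense if this form does not attain its maximum on the boundary of the simplex, i.e. every maximizer $\mathbf{u}$ has all coordinates $u_i>0$. *)

theory Defs
  imports "HOL-Analysis.Analysis"
begin

definition std_simplex :: "(real ^ 'n::finite) set" where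
  "std_simplex = {u. (\<forall>i. 0 \<le> u $ i) \<and> (\<Sum>i\<in>UNIV. u $ i) = 1}"

definition qform :: "real ^ 'n ^ 'n \<Rightarrow> real ^ 'n \<Rightarrow> real" where
  "qform M u = (\<Sum>i\<in>UNIV. \<Sum>j\<in>UNIV. u $ i * M $ i $ j * u $ j)"

definition is_maximizer :: "real ^ 'n ^ 'n \<Rightarrow> real ^ 'n::finite \<Rightarrow> bool" where
  "is_maximizer M u \<longleftrightarrow> u \<in> std_simplex \<and> (\<forall>v\<in>std_simplex. qform M v \<le> qform M u)"

definition dense_matrix :: "real ^ 'n ^ 'n::finite \<Rightarrow> bool" where
  "dense_matrix M \<longleftrightarrow> (\<forall>u. is_maximizer M u \<longrightarrow> (\<forall>i. u $ i > 0))"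

definition symmetric_matrix :: "real ^ 'n ^ 'n \<Rightarrow> bool" where
  "symmetric_matrix M \<longleftrightarrow> transpose M = M"

definition half_one_matrix :: "real ^ 'n ^ 'n \<Rightarrow> bool" where
  "half_one_matrix M \<longleftrightarrow> (\<forall>i. M $ i $ i = 0) \<and> (\<forall>i j. i \<noteq> j \<longrightarrow> M $ i $ j \<in> {1/2, 1})"

(* block matrix  [[A, J^T],[J, A']]  with J the all-ones matrix; indices Inl = first block *)
definition block_join :: "real ^ 'n ^ 'n \<Rightarrow> real ^ 'm ^ 'm \<Rightarrow> real ^ ('n + 'm) ^ ('n + 'm)" where
  "block_join A A' = (\<chi> i j. case (i, j) of
      (Inl a, Inl b) \<Rightarrow> A $ a $ b
    | (Inr a, Inr b) \<Rightarrow> A' $ a $ b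
    | _ \<Rightarrow> 1)"

end

theory Submission
  imports Defs
begin

lemma sum_Plus_UNIV:
  "(\<Sum>i\<in>(UNIV::('a::finite + 'b::finite) set). f i) = (\<Sum>a\<in>UNIV. f (Inl a)) + (\<Sum>b\<in>UNIV. f (Inr b))"
proof -
  have "(\<Sum>i\<in>(UNIV::('a + 'b) set). f i) = (\<Sum>i\<in>(UNIV <+> UNIV). f i)" by simp
  also have "\<dots> = (\<Sum>a\<in>UNIV. f (Inl a)) + (\<Sum>b\<in>UNIV. f (Inr b))"
    by (subst sum.Plus) (auto simp: o_def)
  finally show ?thesis .
qed

lemma bj_entries [simp]:
  "block_join A A' $ Inl a $ Inl b = A $ a $ b"
  "block_join A A' $ Inr c $ Inr d = A' $ c $ d"
  "block_join A A' $ Inl a $ Inr d = 1"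
  "block_join A A' $ Inr c $ Inl b = 1"
  by (simp_all add: block_join_def)

lemma qform_block:
  fixes A :: "real ^ 'n::finite ^ 'n" and A' :: "real ^ 'm::finite ^ 'm"
  shows "qform (block_join A A') w =
    qform A (\<chi> a. w $ Inl a) + qform A' (\<chi> b. w $ Inr b)
    + 2 * (\<Sum>a\<in>UNIV. w $ Inl a) * (\<Sum>b\<in>UNIV. w $ Inr b)"
proof -
  have sw: "(\<Sum>b\<in>UNIV. \<Sum>a\<in>UNIV. w $ Inl a * w $ Inr b) = (\<Sum>a\<in>UNIV. \<Sum>b\<in>UNIV. w $ Inl a * w $ Inr b)"
    by (rule sum.swap)
  show ?thesis
  unfolding qform_def
  by (simp add: sum_Plus_UNIV sum.distrib sum_product sum_distrib_left sum_distrib_right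
      algebra_simps sw)
qed

lemma qform_scale: "qform M (c *s x) = c^2 * qform M x"
  unfolding qform_def by (simp add: sum_distrib_left power2_eq_square algebra_simps)

lemma qform_bounds:
  assumes "half_one_matrix M" "x \<in> std_simplex"
  shows "0 \<le> qform M x \<and> qform M x < 1"
proof -
  have ent: "\<And>i j. 0 \<le> M $ i $ j \<and> M $ i $ j \<le> (if i = j then 0 else 1)"
    using assms(1) unfolding half_one_matrix_def by force
  have nn: "\<And>i. 0 \<le> x $ i" and s1: "(\<Sum>i\<in>UNIV. x $ i) = 1"
    using assms(2) unfolding std_simplex_def by auto
  have "0 \<le> qform M x" unfolding qform_def
    using ent nn by (intro sum_nonneg) auto
  moreover have "qform M x \<le> (\<Sum>i\<in>UNIV. \<Sum>j\<in>UNIV. x $ i * (if i = j then 0 else 1) * x $ j)"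
    unfolding qform_def
    using ent nn by (intro sum_mono mult_right_mono mult_left_mono) auto
  moreover have "(\<Sum>i\<in>UNIV. \<Sum>j\<in>UNIV. x $ i * (if i = j then 0 else 1) * x $ j)
      = (\<Sum>i\<in>UNIV. \<Sum>j\<in>UNIV. x $ i * x $ j) - (\<Sum>i\<in>UNIV. x $ i * x $ i)"
  proof -
    have "\<And>i j. x $ i * (if i = j then 0 else 1) * x $ j = x $ i * x $ j - (if i = j then x $ i * x $ i else 0)"
      by simp
    then show ?thesis by (simp add: sum_subtractf)
  qed
  moreover have "(\<Sum>i\<in>UNIV. \<Sum>j\<in>UNIV. x $ i * x $ j) = 1"
    using s1 by (simp add: sum_product[symmetric])
  moreover have "(\<Sum>i\<in>UNIV. x $ i * x $ i) > 0"
  proof -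
    obtain i where "x $ i \<noteq> 0" using s1 by (metis (no_types, lifting) sum.neutral zero_neq_one)
    then have "x $ i * x $ i > 0" by (auto simp add: zero_less_mult_iff linorder_neq_iff)
    moreover have "x $ i * x $ i \<le> (\<Sum>i\<in>UNIV. x $ i * x $ i)"
      by (rule member_le_sum) auto
    ultimately show ?thesis by linarith
  qed
  ultimately show ?thesis by linarith
qed

lemma dense_improve:
  assumes "dense_matrix M" "x \<in> std_simplex" "x $ i = 0"
  shows "\<exists>x'\<in>std_simplex. qform M x < qform M x'"
  using assms unfolding dense_matrix_def is_maximizer_def by (metis less_irrefl not_le)

definition mk :: "real \<Rightarrow> real ^ 'n::finite \<Rightarrow> real ^ 'm::finite \<Rightarrow> real ^ ('n + 'm)" where
  "mk \<alpha> x y = (\<chi> i. case i of Inl a \<Rightarrow> \<alpha> * x $ a | Inr b \<Rightarrow> (1 - \<alpha>) * y $ b)"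

lemma mk_props:
  fixes A :: "real ^ 'n::finite ^ 'n" and A' :: "real ^ 'm::finite ^ 'm"
  assumes x: "x \<in> std_simplex" and y: "y \<in> std_simplex" and a: "0 \<le> \<alpha>" "\<alpha> \<le> 1"
  shows "mk \<alpha> x y \<in> std_simplex"
    and "qform (block_join A A') (mk \<alpha> x y) = \<alpha>^2 * qform A x + (1-\<alpha>)^2 * qform A' y + 2*\<alpha>*(1-\<alpha>)"
proof -
  have xn: "\<And>i. 0 \<le> x $ i" and xs: "(\<Sum>i\<in>UNIV. x $ i) = 1"
    using x unfolding std_simplex_def by auto
  have yn: "\<And>i. 0 \<le> y $ i" and ys: "(\<Sum>i\<in>UNIV. y $ i) = 1"
    using y unfolding std_simplex_def by auto
  have sx: "(\<Sum>a\<in>UNIV. \<alpha> * x $ a) = \<alpha>" using xs by (simp add: sum_distrib_left[symmetric])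
  have sy: "(\<Sum>a\<in>UNIV. (1-\<alpha>) * y $ a) = 1-\<alpha>" using ys by (simp add: sum_distrib_left[symmetric])
  show "mk \<alpha> x y \<in> std_simplex"
    unfolding std_simplex_def
  proof (intro CollectI conjI allI)
    fix i show "0 \<le> mk \<alpha> x y $ i" using xn yn a by (cases i) (auto simp: mk_def)
  next
    show "(\<Sum>i\<in>UNIV. mk \<alpha> x y $ i) = 1" by (simp add: sum_Plus_UNIV mk_def sx sy)
  qed
  have p: "(\<chi> a. mk \<alpha> x y $ Inl a) = \<alpha> *s x" by (simp add: vec_eq_iff mk_def)
  have q: "(\<chi> a. mk \<alpha> x y $ Inr a) = (1-\<alpha>) *s y" by (simp add: vec_eq_iff mk_def algebra_simps)
  show "qform (block_join A A') (mk \<alpha> x y) = \<alpha>^2 * qform A x + (1-\<alpha>)^2 * qform A' y + 2*\<alpha>*(1-\<alpha>)"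
    unfolding qform_block p q qform_scale by (simp add: mk_def sx sy)
qed

lemma ineq_aux:
  fixes f g :: real
  assumes "0 \<le> f" "0 \<le> g" "g < 1"
  shows "((1-g)/2)^2 * f + (1-(1-g)/2)^2 * g + 2*((1-g)/2)*(1-(1-g)/2) > g"
proof -
  have h0: "0 \<le> (f+g)/2" using assms by simp
  have h: "0 < 1 + (f+g)/2" using h0 by linarith
  have "((1-g)/2)^2 * f + (1-(1-g)/2)^2 * g + 2*((1-g)/2)*(1-(1-g)/2) - g
      = ((1-g)/2) * (1-g) * (1 + (f+g)/2)"
    by (simp add: power2_eq_square field_simps)
  also have "\<dots> > 0" using assms h by (intro mult_pos_pos) auto
  finally show ?thesis by simp
qed

lemma simplex_exists: "\<exists>x::real^'n::finite. x \<in> std_simplex"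
  by (rule exI[of _ "\<chi> i. 1 / real CARD('n)"]) (simp add: std_simplex_def)

theorem mainTheorem5:
  fixes A :: "real ^ 'n::finite ^ 'n" and A' :: "real ^ 'm::finite ^ 'm"
  assumes "symmetric_matrix A" and "half_one_matrix A" and "dense_matrix A"
    and "symmetric_matrix A'" and "half_one_matrix A'" and "dense_matrix A'"
  shows "dense_matrix (block_join A A')"
  unfolding dense_matrix_def
proof (intro allI impI)
  fix w :: "real ^ ('n + 'm)" and k
  assume mx: "is_maximizer (block_join A A') w"
  then have wS: "w \<in> std_simplex" and best: "\<And>v. v \<in> std_simplex \<Longrightarrow> qform (block_join A A') v \<le> qform (block_join A A') w"
    unfolding is_maximizer_def by auto
  have wn: "\<And>i. 0 \<le> w $ i" and ws: "(\<Sum>i\<in>UNIV. w $ i) = 1" using wS unfolding std_simplex_def by auto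
  show "w $ k > 0"
  proof (rule ccontr)
    assume "\<not> w $ k > 0"
    with wn have wk: "w $ k = 0" by (meson not_less order_antisym)
    define p where "p = (\<chi> a. w $ Inl a)"
    define q where "q = (\<chi> a. w $ Inr a)"
    define s where "s = (\<Sum>a\<in>UNIV. p $ a)"
    define t where "t = (\<Sum>a\<in>UNIV. q $ a)"
    have pn: "\<And>a. 0 \<le> p $ a" and qn: "\<And>a. 0 \<le> q $ a" using wn by (auto simp: p_def q_def)
    have st: "s + t = 1" using ws by (simp add: sum_Plus_UNIV s_def t_def p_def q_def)
    have s0: "0 \<le> s" "0 \<le> t" using pn qn unfolding s_def t_def by (auto intro: sum_nonneg)
    have Qw: "qform (block_join A A') w = qform A p + qform A' q + 2 * s * t"
      unfolding qform_block p_def q_def s_def t_def by simp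
    obtain x0 :: "real^'n" where x0: "x0 \<in> std_simplex" using simplex_exists by blast
    obtain y0 :: "real^'m" where y0: "y0 \<in> std_simplex" using simplex_exists by blast
    show False
    proof (cases "s = 0")
      case True
      then have "\<forall>a\<in>UNIV. p $ a = 0" using pn unfolding s_def by (subst sum_nonneg_eq_0_iff[symmetric]) auto
      then have "p = 0 *s x0" by (simp add: vec_eq_iff)
      then have qp: "qform A p = 0" by (simp add: qform_def)
      have t1: "t = 1" using st True by simp
      have qS: "q \<in> std_simplex" using qn t1 unfolding std_simplex_def t_def by auto
      define g where "g = qform A' q"
      define f where "f = qform A x0"
      have fb: "0 \<le> f" "f < 1" using qform_bounds[OF assms(2) x0] f_def by auto
      have gb: "0 \<le> g" "g < 1" using qform_bounds[OF assms(5) qS] g_def by auto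
      let ?\<alpha> = "(1-g)/2"
      have "qform (block_join A A') (mk ?\<alpha> x0 q) \<le> qform (block_join A A') w"
        using best mk_props(1)[OF x0 qS] gb by auto
      moreover have "qform (block_join A A') (mk ?\<alpha> x0 q) = ?\<alpha>^2 * f + (1-?\<alpha>)^2 * g + 2*?\<alpha>*(1-?\<alpha>)"
        using mk_props(2)[OF x0 qS] gb f_def g_def by auto
      moreover have "qform (block_join A A') w = g" using Qw qp True g_def by simp
      ultimately show False using ineq_aux[OF fb(1) gb] by simp
    next
      case sn: False
      show False
      proof (cases "t = 0")
        case True
        then have "\<forall>a\<in>UNIV. q $ a = 0" using qn unfolding t_def by (subst sum_nonneg_eq_0_iff[symmetric]) auto
        then have "q = 0 *s y0" by (simp add: vec_eq_iff)
        then have qq: "qform A' q = 0" by (simp add: qform_def)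
        have s1: "s = 1" using st True by simp
        have pS: "p \<in> std_simplex" using pn s1 unfolding std_simplex_def s_def by auto
        define f where "f = qform A p"
        define g where "g = qform A' y0"
        have fb: "0 \<le> f" "f < 1" using qform_bounds[OF assms(2) pS] f_def by auto
        have gb: "0 \<le> g" "g < 1" using qform_bounds[OF assms(5) y0] g_def by auto
        define b where "b = (1-f)/2"
        let ?\<alpha> = "1 - b"
        have "qform (block_join A A') (mk ?\<alpha> p y0) \<le> qform (block_join A A') w"
          using best mk_props(1)[OF pS y0] fb b_def by auto
        moreover have "qform (block_join A A') (mk ?\<alpha> p y0) = ?\<alpha>^2 * f + (1-?\<alpha>)^2 * g + 2*?\<alpha>*(1-?\<alpha>)"
          using mk_props(2)[OF pS y0] fb f_def g_def b_def by auto
        moreover have "qform (block_join A A') w = f" using Qw qq True f_def by simp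
        moreover have "?\<alpha>^2 * f + (1-?\<alpha>)^2 * g + 2*?\<alpha>*(1-?\<alpha>) = b^2*g + (1-b)^2*f + 2*b*(1-b)"
          by (simp add: algebra_simps)
        ultimately show False using ineq_aux[OF gb(1) fb] unfolding b_def by linarith
      next
        case tn: False
        have sp: "s > 0" "t > 0" using sn tn s0 by auto
        define x where "x = (1/s) *s p"
        define y where "y = (1/t) *s q"
        have xS: "x \<in> std_simplex" using pn sp unfolding std_simplex_def x_def s_def
          by (auto simp: sum_distrib_left[symmetric] sum_divide_distrib[symmetric])
        have yS: "y \<in> std_simplex" using qn sp unfolding std_simplex_def y_def t_def
          by (auto simp: sum_distrib_left[symmetric] sum_divide_distrib[symmetric])
        have px: "p = s *s x" using sp by (simp add: x_def vec_eq_iff)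
        have qy: "q = t *s y" using sp by (simp add: y_def vec_eq_iff)
        have ts: "t = 1 - s" using st by simp
        have sle: "0 \<le> s" "s \<le> 1" using sp st by auto
        have Qw2: "qform (block_join A A') w = s^2 * qform A x + (1-s)^2 * qform A' y + 2 * s * (1-s)"
          using Qw px qy ts by (simp only: qform_scale)
        show False
        proof (cases k)
          case (Inl a)
          have "x $ a = 0" using wk sp by (simp add: x_def p_def Inl)
          then obtain x' where x'S: "x' \<in> std_simplex" and lt: "qform A x < qform A x'"
            using dense_improve[OF assms(3) xS] by blast
          have "qform (block_join A A') (mk s x' y) \<le> qform (block_join A A') w"
            using best mk_props(1)[OF x'S yS sle] by auto
          moreover have "s^2 * qform A x < s^2 * qform A x'" using lt sp by simp
          ultimately show False using mk_props(2)[OF x'S yS sle, of A A'] Qw2 by simp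
        next
          case (Inr b)
          have "y $ b = 0" using wk sp by (simp add: y_def q_def Inr)
          then obtain y' where y'S: "y' \<in> std_simplex" and lt: "qform A' y < qform A' y'"
            using dense_improve[OF assms(6) yS] by blast
          have "qform (block_join A A') (mk s x y') \<le> qform (block_join A A') w"
            using best mk_props(1)[OF xS y'S sle] by auto
          moreover have "(1-s)^2 * qform A' y < (1-s)^2 * qform A' y'" using lt sp ts by simp
          ultimately show False using mk_props(2)[OF xS y'S sle, of A A'] Qw2 by simp
        qed
      qed
    qed
  qed
qed

end
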